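(* Let $T\in\mathcal{T}_\pi$, let $u,v\in V(T)$ be distinct vertices, and let $ux_1,\ldots,ux_k\in E(T)$ ($k\ge1$) be edges such that none of the $x_i$ lies on the path $P_{uv}$. Let $T'$ be obtained from $T$ by replacing the edges $ux_1,\ldots,ux_k$ by the edges $vx_1,\ldots,vx_k$. If $f$ is an eigenvector of $L(T)$ corresponding to $\lambda(T)$ with $|f(u)|\le|f(v)|$, then $\lambda(T')>\lambda(T)$.
   Context: For a graph $G=(V,E)$ the Laplacian is $L(G)=D(G)-A(G)$ ($D$ the diagonal degree matrix, $A$ the adjacency matrix), and $\lambda(G)$ denotes its largest eigenvalue. $\mathcal{T}_\pi$ is the set of all trees with degree sequence $\pi$. $P_{uv}$ denotes the (unique) path in the tree between vertices $u$ and $v$. *)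

theory Defs
  imports Complex_Main
begin

definition simple_graph :: "'a set \<Rightarrow> 'a set set \<Rightarrow> bool" where
  "simple_graph V E \<longleftrightarrow> finite V \<and>
     (\<forall>e\<in>E. \<exists>x y. x \<noteq> y \<and> x \<in> V \<and> y \<in> V \<and> e = {x, y})"

definition adj :: "'a set set \<Rightarrow> 'a \<Rightarrow> 'a \<Rightarrow> bool" where
  "adj E x y \<longleftrightarrow> {x, y} \<in> E"

definition is_path :: "'a set set \<Rightarrow> 'a list \<Rightarrow> bool" where
  "is_path E ps \<longleftrightarrow> ps \<noteq> [] \<and> distinct ps \<and>
     (\<forall>i. Suc i < length ps \<longrightarrow> adj E (ps ! i) (ps ! Suc i))"

definition connected_graph :: "'a set \<Rightarrow> 'a set set \<Rightarrow> bool" where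
  "connected_graph V E \<longleftrightarrow>
     (\<forall>x\<in>V. \<forall>y\<in>V. \<exists>ps. is_path E ps \<and> hd ps = x \<and> last ps = y)"

definition acyclic_graph :: "'a set set \<Rightarrow> bool" where
  "acyclic_graph E \<longleftrightarrow>
     \<not> (\<exists>ps. is_path E ps \<and> length ps \<ge> 3 \<and> adj E (last ps) (hd ps))"

definition is_tree :: "'a set \<Rightarrow> 'a set set \<Rightarrow> bool" where
  "is_tree V E \<longleftrightarrow> simple_graph V E \<and> V \<noteq> {} \<and> connected_graph V E \<and> acyclic_graph E"

text \<open>Vertex x lies on the (unique, in a tree) path P_uv.\<close>
definition on_path :: "'a set set \<Rightarrow> 'a \<Rightarrow> 'a \<Rightarrow> 'a \<Rightarrow> bool" where
  "on_path E u v x \<longleftrightarrow> (\<exists>ps. is_path E ps \<and> hd ps = u \<and> last ps = v \<and> x \<in> set ps)"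

definition degree :: "'a set set \<Rightarrow> 'a \<Rightarrow> nat" where
  "degree E x = card {y. {x, y} \<in> E}"

definition laplacian :: "'a set \<Rightarrow> 'a set set \<Rightarrow> ('a \<Rightarrow> real) \<Rightarrow> 'a \<Rightarrow> real" where
  "laplacian V E f x = real (degree E x) * f x - (\<Sum>y\<in>{y\<in>V. adj E x y}. f y)"

definition lap_eigenvector :: "'a set \<Rightarrow> 'a set set \<Rightarrow> real \<Rightarrow> ('a \<Rightarrow> real) \<Rightarrow> bool" where
  "lap_eigenvector V E \<mu> f \<longleftrightarrow> (\<forall>x. x \<notin> V \<longrightarrow> f x = 0) \<and> (\<exists>x\<in>V. f x \<noteq> 0) \<and>
     (\<forall>x\<in>V. laplacian V E f x = \<mu> * f x)"

definition lap_eigenvalues :: "'a set \<Rightarrow> 'a set set \<Rightarrow> real set" where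
  "lap_eigenvalues V E = {\<mu>. \<exists>f. lap_eigenvector V E \<mu> f}"

definition lap_max_eig :: "'a set \<Rightarrow> 'a set set \<Rightarrow> real" where
  "lap_max_eig V E = Max (lap_eigenvalues V E)"

end

theory Submission
  imports Defs "HOL-Analysis.Analysis"
begin

definition nbr :: "'a set \<Rightarrow> 'a set set \<Rightarrow> 'a \<Rightarrow> 'a set" where
  "nbr V E x = {y\<in>V. adj E x y}"
definition prs :: "'a set \<Rightarrow> 'a set set \<Rightarrow> ('a \<times> 'a) set" where
  "prs V E = {(y,z). y\<in>V \<and> z\<in>V \<and> adj E y z}"
definition Qp :: "'a set \<Rightarrow> 'a set set \<Rightarrow> ('a \<Rightarrow> real) \<Rightarrow> real" where
  "Qp V E h = (\<Sum>p\<in>prs V E. (h (fst p) - h (snd p))^2)"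
definition Bp :: "'a set \<Rightarrow> 'a set set \<Rightarrow> ('a \<Rightarrow> real) \<Rightarrow> ('a \<Rightarrow> real) \<Rightarrow> real" where
  "Bp V E g w = (\<Sum>p\<in>prs V E. (g (fst p) - g (snd p)) * (w (fst p) - w (snd p)))"
definition nsq :: "'a set \<Rightarrow> ('a \<Rightarrow> real) \<Rightarrow> real" where
  "nsq V h = (\<Sum>x\<in>V. (h x)^2)"
definition ip :: "'a set \<Rightarrow> ('a \<Rightarrow> real) \<Rightarrow> ('a \<Rightarrow> real) \<Rightarrow> real" where
  "ip V g w = (\<Sum>x\<in>V. g x * w x)"
definition supp :: "'a set \<Rightarrow> ('a \<Rightarrow> real) \<Rightarrow> bool" where
  "supp V h = (\<forall>x. x \<notin> V \<longrightarrow> h x = 0)"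

lemma adj_sym: "adj E x y = adj E y x"
  by (simp add: adj_def insert_commute)

lemma sg_edge: "simple_graph V E \<Longrightarrow> {x,y} \<in> E \<Longrightarrow> x \<in> V \<and> y \<in> V \<and> x \<noteq> y"
  unfolding simple_graph_def by (metis doubleton_eq_iff)

lemma lap_nbr:
  assumes "simple_graph V E"
  shows "laplacian V E h x = (\<Sum>y\<in>nbr V E x. h x - h y)"
proof -
  have fin: "finite V" using assms simple_graph_def by auto
  have "{y. {x, y} \<in> E} = nbr V E x"
    using sg_edge[OF assms] by (auto simp: nbr_def adj_def)
  then have "Defs.degree E x = card (nbr V E x)" by (simp add: Defs.degree_def)
  moreover have "{y\<in>V. adj E x y} = nbr V E x" by (simp add: nbr_def)
  ultimately show ?thesis
    by (simp add: laplacian_def sum_subtractf)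
qed

lemma fin_prs: "finite V \<Longrightarrow> finite (prs V E)"
  by (rule finite_subset[of _ "V \<times> V"]) (auto simp: prs_def)

lemma prs_swap:
  assumes "finite V"
  shows "(\<Sum>p\<in>prs V E. \<phi> p) = (\<Sum>p\<in>prs V E. \<phi> (snd p, fst p))"
proof -
  have "(\<Sum>p\<in>prs V E. \<phi> (snd p, fst p)) = (\<Sum>p\<in>prod.swap ` prs V E. \<phi> p)"
    by (subst sum.reindex) (auto simp: comp_def prod.swap_def)
  moreover have "prod.swap ` prs V E = prs V E"
    by (auto simp: prs_def adj_sym image_iff)
  ultimately show ?thesis by simp
qed

lemma prs_Sigma:
  assumes "finite V"
  shows "(\<Sum>p\<in>prs V E. \<phi> p) = (\<Sum>y\<in>V. \<Sum>z\<in>nbr V E y. \<phi> (y,z))"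
proof -
  have "prs V E = Sigma V (nbr V E)" by (auto simp: prs_def nbr_def)
  moreover have "(\<Sum>y\<in>V. \<Sum>z\<in>nbr V E y. \<phi> (y,z)) = (\<Sum>p\<in>Sigma V (nbr V E). \<phi> p)"
    by (subst sum.Sigma) (auto simp: nbr_def assms split_def)
  ultimately show ?thesis by simp
qed

lemma Bp_lap:
  assumes sg: "simple_graph V E"
  shows "Bp V E g w = 2 * (\<Sum>y\<in>V. w y * laplacian V E g y)"
proof -
  have fin: "finite V" using sg simple_graph_def by auto
  have "Bp V E g w = (\<Sum>p\<in>prs V E. (g (fst p) - g (snd p)) * w (fst p))
       - (\<Sum>p\<in>prs V E. (g (fst p) - g (snd p)) * w (snd p))"
    by (simp add: Bp_def right_diff_distrib sum_subtractf)
  also have "(\<Sum>p\<in>prs V E. (g (fst p) - g (snd p)) * w (snd p))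
      = - (\<Sum>p\<in>prs V E. (g (fst p) - g (snd p)) * w (fst p))"
    by (subst prs_swap[OF fin]) (simp add: sum_negf[symmetric] algebra_simps)
  finally have "Bp V E g w = 2 * (\<Sum>p\<in>prs V E. (g (fst p) - g (snd p)) * w (fst p))" by simp
  also have "(\<Sum>p\<in>prs V E. (g (fst p) - g (snd p)) * w (fst p)) = (\<Sum>y\<in>V. w y * laplacian V E g y)"
    by (simp add: prs_Sigma[OF fin] lap_nbr[OF sg] sum_distrib_left mult.commute)
  finally show ?thesis .
qed

lemma Qp_Bp: "Qp V E h = Bp V E h h"
  by (simp add: Qp_def Bp_def power2_eq_square)

lemma Qp_lin: "Qp V E (\<lambda>x. g x + t * w x) = Qp V E g + 2 * t * Bp V E g w + t^2 * Qp V E w"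
proof -
  have "Qp V E (\<lambda>x. g x + t * w x) = (\<Sum>p\<in>prs V E. (g (fst p) - g (snd p))^2 + 2 * t * ((g (fst p) - g (snd p)) * (w (fst p) - w (snd p))) + t^2 * (w (fst p) - w (snd p))^2)"
    unfolding Qp_def by (rule sum.cong) (simp_all add: power2_eq_square algebra_simps)
  then show ?thesis by (simp add: Qp_def Bp_def sum.distrib sum_distrib_left)
qed

lemma nsq_lin: "nsq V (\<lambda>x. g x + t * w x) = nsq V g + 2 * t * ip V g w + t^2 * nsq V w"
proof -
  have "nsq V (\<lambda>x. g x + t * w x) = (\<Sum>x\<in>V. (g x)^2 + 2 * t * (g x * w x) + t^2 * (w x)^2)"
    unfolding nsq_def by (rule sum.cong) (simp_all add: power2_eq_square algebra_simps)
  then show ?thesis by (simp add: nsq_def ip_def sum.distrib sum_distrib_left)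
qed

lemma quad_zero:
  fixes a b :: real
  assumes "\<forall>t. a * t + b * t^2 \<le> 0"
  shows "a = 0"
proof (rule ccontr)
  assume a: "a \<noteq> 0"
  define c where "c = 2 * (\<bar>b\<bar> + 1)"
  define t where "t = a / c"
  have c: "c > 0" by (simp add: c_def)
  have aa: "a * a > 0" using a by (auto simp: zero_less_mult_iff linorder_neq_iff)
  have at: "a * t > 0" using aa c by (simp add: t_def)
  have t2: "\<bar>b\<bar> * t^2 = (\<bar>b\<bar> / c) * (a * t)" by (simp add: t_def power2_eq_square)
  have bc: "\<bar>b\<bar> / c \<le> 1/2" using c by (simp add: c_def field_simps)
  have "\<bar>b\<bar> * t^2 \<le> (1/2) * (a * t)" unfolding t2 using bc at by (intro mult_right_mono) auto
  moreover have "b * t^2 \<ge> - \<bar>b\<bar> * t^2"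
  proof -
    have "- \<bar>b\<bar> \<le> b" by simp
    then have "- \<bar>b\<bar> * t^2 \<le> b * t^2" by (rule mult_right_mono) simp
    then show ?thesis by simp
  qed
  ultimately have "a * t + b * t^2 > 0" using at by linarith
  with assms show False by (meson not_le)
qed

lemma maximizer_eig:
  assumes sg: "simple_graph V E" and sg0: "supp V g"
    and bound: "\<forall>h. supp V h \<longrightarrow> Qp V E h \<le> 2 * \<mu> * nsq V h"
    and eq: "Qp V E g = 2 * \<mu> * nsq V g"
    and aV: "a \<in> V"
  shows "laplacian V E g a = \<mu> * g a"
proof -
  have fin: "finite V" using sg simple_graph_def by auto
  define w where "w = (\<lambda>y. if y = a then 1 else 0::real)"
  have "\<forall>t. (2 * Bp V E g w - 4 * \<mu> * ip V g w) * t + (Qp V E w - 2 * \<mu> * nsq V w) * t^2 \<le> 0"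
  proof
    fix t
    have "supp V (\<lambda>x. g x + t * w x)" using sg0 aV by (auto simp: supp_def w_def)
    then have "Qp V E (\<lambda>x. g x + t * w x) \<le> 2 * \<mu> * nsq V (\<lambda>x. g x + t * w x)" using bound by blast
    then show "(2 * Bp V E g w - 4 * \<mu> * ip V g w) * t + (Qp V E w - 2 * \<mu> * nsq V w) * t^2 \<le> 0"
      unfolding Qp_lin nsq_lin using eq by (simp add: algebra_simps)
  qed
  then have "2 * Bp V E g w - 4 * \<mu> * ip V g w = 0" by (rule quad_zero)
  moreover have "Bp V E g w = 2 * laplacian V E g a"
  proof -
    have "(\<Sum>y\<in>V. w y * laplacian V E g y) = (\<Sum>y\<in>V. if y = a then laplacian V E g y else 0)"
      by (rule sum.cong) (auto simp: w_def)
    then show ?thesis unfolding Bp_lap[OF sg] using fin aV by simp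
  qed
  moreover have "ip V g w = g a"
  proof -
    have "(\<Sum>y\<in>V. g y * w y) = (\<Sum>y\<in>V. if y = a then g y else 0)"
      by (rule sum.cong) (auto simp: w_def)
    then show ?thesis unfolding ip_def using fin aV by simp
  qed
  ultimately show ?thesis by simp
qed

lemma eig_Qp:
  assumes sg: "simple_graph V E" and e: "\<forall>x\<in>V. laplacian V E f x = \<mu> * f x"
  shows "Qp V E f = 2 * \<mu> * nsq V f"
  unfolding Qp_Bp Bp_lap[OF sg] nsq_def using e
  by (simp add: sum_distrib_left power2_eq_square algebra_simps)

lemma eig_Bp:
  assumes sg: "simple_graph V E" and e: "\<forall>x\<in>V. laplacian V E f x = \<mu> * f x"
  shows "Bp V E f g = 2 * \<mu> * ip V g f"
  unfolding Bp_lap[OF sg] ip_def using e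
  by (simp add: sum_distrib_left algebra_simps)

lemma Bp_sym: "Bp V E f g = Bp V E g f"
  by (simp add: Bp_def mult.commute)

lemma ip_sym: "ip V f g = ip V g f"
  by (simp add: ip_def mult.commute)

lemma orth_eig:
  assumes sg: "simple_graph V E"
    and f: "\<forall>x\<in>V. laplacian V E f x = \<mu> * f x"
    and g: "\<forall>x\<in>V. laplacian V E g x = \<nu> * g x"
    and ne: "\<mu> \<noteq> \<nu>"
  shows "ip V f g = 0"
proof -
  have 1: "Bp V E f g = 2 * \<mu> * ip V g f" by (rule eig_Bp[OF sg f])
  have 2: "Bp V E g f = 2 * \<nu> * ip V f g" by (rule eig_Bp[OF sg g])
  have "ip V g f = 0 \<or> \<mu> = \<nu>" using 1 2 Bp_sym[of V E f g] ip_sym[of V f g] by auto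
  then show ?thesis using ne ip_sym[of V f g] by auto
qed

lemma bessel:
  assumes fin: "finite V" and finF: "finite F"
    and n1: "\<forall>m\<in>F. nsq V (e m) = 1"
    and orth: "\<forall>m\<in>F. \<forall>n\<in>F. m \<noteq> n \<longrightarrow> ip V (e m) (e n) = 0"
    and xV: "x \<in> V"
  shows "(\<Sum>m\<in>F. (e m x)^2) \<le> 1"
proof -
  define c where "c m = e m x" for m
  define S where "S y = (\<Sum>m\<in>F. c m * e m y)" for y
  define d where "d y = (if y = x then 1 else 0::real)" for y
  have ipe: "ip V (e m) (e n) = (if m = n then 1 else 0)" if "m \<in> F" "n \<in> F" for m n
    using that n1 orth by (auto simp: nsq_def ip_def power2_eq_square)
  have "0 \<le> (\<Sum>y\<in>V. (d y - S y)^2)" by (simp add: sum_nonneg)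
  also have "(\<Sum>y\<in>V. (d y - S y)^2) = (\<Sum>y\<in>V. (d y)^2 - 2 * (d y * S y) + (S y)^2)"
    by (rule sum.cong) (simp_all add: power2_diff)
  also have "\<dots> = (\<Sum>y\<in>V. (d y)^2) - 2 * (\<Sum>y\<in>V. d y * S y) + (\<Sum>y\<in>V. (S y)^2)"
    by (simp only: sum.distrib sum_subtractf sum_distrib_left)
  finally have main: "0 \<le> (\<Sum>y\<in>V. (d y)^2) - 2 * (\<Sum>y\<in>V. d y * S y) + (\<Sum>y\<in>V. (S y)^2)" .
  have A: "(\<Sum>y\<in>V. (d y)^2) = 1"
  proof -
    have "(\<Sum>y\<in>V. (d y)^2) = (\<Sum>y\<in>V. if y = x then 1 else 0)" by (rule sum.cong) (auto simp: d_def)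
    then show ?thesis using fin xV by simp
  qed
  have B: "(\<Sum>y\<in>V. d y * S y) = (\<Sum>m\<in>F. (c m)^2)"
  proof -
    have "(\<Sum>y\<in>V. d y * S y) = (\<Sum>y\<in>V. if y = x then S y else 0)" by (rule sum.cong) (auto simp: d_def)
    then show ?thesis using fin xV by (simp add: S_def c_def power2_eq_square)
  qed
  have C: "(\<Sum>y\<in>V. (S y)^2) = (\<Sum>m\<in>F. (c m)^2)"
  proof -
    have "(\<Sum>y\<in>V. (S y)^2) = (\<Sum>y\<in>V. \<Sum>m\<in>F. \<Sum>n\<in>F. c m * c n * (e m y * e n y))"
    proof (rule sum.cong[OF refl])
      fix y
      have "(S y)^2 = (\<Sum>m\<in>F. c m * e m y) * (\<Sum>n\<in>F. c n * e n y)" by (simp add: S_def power2_eq_square)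
      also have "\<dots> = (\<Sum>m\<in>F. \<Sum>n\<in>F. (c m * e m y) * (c n * e n y))" by (rule sum_product)
      also have "\<dots> = (\<Sum>m\<in>F. \<Sum>n\<in>F. c m * c n * (e m y * e n y))" by (simp add: mult_ac)
      finally show "(S y)^2 = (\<Sum>m\<in>F. \<Sum>n\<in>F. c m * c n * (e m y * e n y))" .
    qed
    also have "\<dots> = (\<Sum>m\<in>F. \<Sum>y\<in>V. \<Sum>n\<in>F. c m * c n * (e m y * e n y))"
      by (rule sum.swap)
    also have "\<dots> = (\<Sum>m\<in>F. \<Sum>n\<in>F. \<Sum>y\<in>V. c m * c n * (e m y * e n y))"
      by (rule sum.cong[OF refl], rule sum.swap)
    also have "\<dots> = (\<Sum>m\<in>F. \<Sum>n\<in>F. c m * c n * ip V (e m) (e n))"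
      by (simp add: ip_def sum_distrib_left)
    also have "\<dots> = (\<Sum>m\<in>F. \<Sum>n\<in>F. if m = n then c m * c n else 0)"
      by (rule sum.cong[OF refl], rule sum.cong[OF refl]) (simp add: ipe)
    also have "\<dots> = (\<Sum>m\<in>F. (c m)^2)"
      using finF by (simp add: power2_eq_square)
    finally show ?thesis .
  qed
  from main A B C have "(\<Sum>m\<in>F. (c m)^2) \<le> 1" by linarith
  then show ?thesis by (simp add: c_def)
qed

lemma card_orthonormal:
  assumes fin: "finite V" and finF: "finite F"
    and n1: "\<forall>m\<in>F. nsq V (e m) = 1"
    and orth: "\<forall>m\<in>F. \<forall>n\<in>F. m \<noteq> n \<longrightarrow> ip V (e m) (e n) = 0"
  shows "card F \<le> card V"
proof -
  have "real (card F) = (\<Sum>m\<in>F. nsq V (e m))" using n1 by simp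
  also have "\<dots> = (\<Sum>x\<in>V. \<Sum>m\<in>F. (e m x)^2)" unfolding nsq_def by (rule sum.swap)
  also have "\<dots> \<le> (\<Sum>x\<in>V. 1)" by (rule sum_mono) (rule bessel[OF fin finF n1 orth])
  also have "\<dots> = real (card V)" by simp
  finally show ?thesis by simp
qed

lemma nsq_pos: "finite V \<Longrightarrow> x \<in> V \<Longrightarrow> f x \<noteq> 0 \<Longrightarrow> nsq V f > 0"
  unfolding nsq_def by (rule sum_pos2[of V x]) auto

lemma nsq_scale: "nsq V (\<lambda>x. a * f x) = a^2 * nsq V f"
  by (simp add: nsq_def power_mult_distrib sum_distrib_left)

lemma ip_scale: "ip V (\<lambda>x. a * f x) (\<lambda>x. b * g x) = a * b * ip V f g"
  by (simp add: ip_def sum_distrib_left algebra_simps)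

lemma Qp_scale: "Qp V E (\<lambda>x. a * f x) = a^2 * Qp V E f"
proof -
  have "Qp V E (\<lambda>x. a * f x) = (\<Sum>p\<in>prs V E. a^2 * (f (fst p) - f (snd p))^2)"
    unfolding Qp_def by (rule sum.cong) (simp_all add: power2_eq_square algebra_simps)
  then show ?thesis by (simp add: Qp_def sum_distrib_left)
qed

lemma eigs_finite:
  assumes sg: "simple_graph V E"
  shows "finite (lap_eigenvalues V E)"
proof (rule ccontr)
  assume inf: "infinite (lap_eigenvalues V E)"
  have fin: "finite V" using sg simple_graph_def by auto
  obtain F where F: "F \<subseteq> lap_eigenvalues V E" "finite F" "card F = Suc (card V)"
    using infinite_arbitrarily_large[OF inf] by blast
  define ev where "ev m = (SOME f. lap_eigenvector V E m f)" for m
  have ev: "lap_eigenvector V E m (ev m)" if "m \<in> F" for m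
  proof -
    have "\<exists>f. lap_eigenvector V E m f" using F(1) that unfolding lap_eigenvalues_def by blast
    then show ?thesis unfolding ev_def by (rule someI_ex)
  qed
  define e where "e m = (\<lambda>x. (1 / sqrt (nsq V (ev m))) * ev m x)" for m
  have pos: "nsq V (ev m) > 0" if mF: "m \<in> F" for m
  proof -
    obtain x where "x \<in> V" "ev m x \<noteq> 0" using ev[OF mF] unfolding lap_eigenvector_def by blast
    then show ?thesis using nsq_pos[OF fin] by blast
  qed
  have "\<forall>m\<in>F. nsq V (e m) = 1"
  proof
    fix m assume m: "m \<in> F"
    have "nsq V (e m) = (1 / sqrt (nsq V (ev m)))^2 * nsq V (ev m)" unfolding e_def by (rule nsq_scale)
    also have "\<dots> = 1" using pos[OF m] by (simp add: power_divide)
    finally show "nsq V (e m) = 1" .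
  qed
  moreover have "\<forall>m\<in>F. \<forall>n\<in>F. m \<noteq> n \<longrightarrow> ip V (e m) (e n) = 0"
  proof (intro ballI impI)
    fix m n assume m: "m \<in> F" and n: "n \<in> F" and mn: "m \<noteq> n"
    have "ip V (ev m) (ev n) = 0"
      using orth_eig[OF sg _ _ mn] ev[OF m] ev[OF n] unfolding lap_eigenvector_def by blast
    then show "ip V (e m) (e n) = 0" unfolding e_def ip_scale by simp
  qed
  ultimately have "card F \<le> card V" using card_orthonormal[OF fin F(2)] by blast
  with F(3) show False by simp
qed


lemma cont_nsq: "continuous_on UNIV (\<lambda>h::'a \<Rightarrow> real. nsq V h)"
  unfolding nsq_def by (intro continuous_intros continuous_on_product_coordinates)

lemma cont_Qp: "continuous_on UNIV (\<lambda>h::'a \<Rightarrow> real. Qp V E h)"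
  unfolding Qp_def by (intro continuous_intros continuous_on_product_coordinates)

lemma exists_max:
  fixes V :: "'a set"
  assumes fin: "finite V" and ne: "V \<noteq> {}"
  shows "\<exists>g. supp V g \<and> nsq V g = 1 \<and> (\<forall>h. supp V h \<and> nsq V h = 1 \<longrightarrow> Qp V E h \<le> Qp V E g)"
proof -
  define Sx where "Sx x = (if x \<in> V then {-1..1} else {0::real})" for x
  define K where "K = Pi\<^sub>E UNIV Sx"
  have "compactin (product_topology (\<lambda>i. euclidean) UNIV) K"
    unfolding K_def compactin_PiE by (auto simp: Sx_def)
  then have cK: "compact K" by (simp add: euclidean_product_topology)
  define S0 where "S0 = K \<inter> {h. nsq V h = 1}"
  have "closed {h::'a\<Rightarrow>real. nsq V h = 1}"
    by (rule closed_Collect_eq[OF cont_nsq continuous_on_const])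
  then have cS: "compact S0" unfolding S0_def using cK by blast
  have memS: "h \<in> S0" if "supp V h" "nsq V h = 1" for h
  proof -
    have "h x \<in> Sx x" for x
    proof (cases "x \<in> V")
      case True
      have "(h x)^2 \<le> nsq V h" unfolding nsq_def by (rule member_le_sum[OF True]) (auto simp: fin)
      then have "(h x)^2 \<le> 1" using that by simp
      then have "\<bar>h x\<bar> \<le> 1" by (simp add: abs_square_le_1)
      then show ?thesis using True by (simp add: Sx_def abs_le_iff)
    next
      case False
      then show ?thesis using that by (simp add: Sx_def supp_def)
    qed
    then show ?thesis using that by (simp add: S0_def K_def PiE_UNIV_domain)
  qed
  have suppS: "supp V h" if "h \<in> S0" for h
    using that by (auto simp: S0_def K_def Sx_def supp_def PiE_iff split: if_splits)
  obtain x0 where x0: "x0 \<in> V" using ne by blast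
  define d where "d y = (if y = x0 then 1 else 0::real)" for y
  have "nsq V d = 1"
  proof -
    have "nsq V d = (\<Sum>y\<in>V. if y = x0 then 1 else 0)" unfolding nsq_def by (rule sum.cong) (auto simp: d_def)
    then show ?thesis using fin x0 by simp
  qed
  moreover have "supp V d" using x0 by (simp add: supp_def d_def)
  ultimately have "S0 \<noteq> {}" using memS by blast
  moreover have "continuous_on S0 (Qp V E)" using cont_Qp continuous_on_subset by blast
  ultimately obtain g where g: "g \<in> S0" "\<forall>y\<in>S0. Qp V E y \<le> Qp V E g"
    using continuous_attains_sup[OF cS] by blast
  show ?thesis
    apply (rule exI[of _ g])
    using g suppS memS by (auto simp: S0_def)
qed

lemma Qp_zero:
  assumes fin: "finite V" and s: "supp V h" and n: "nsq V h = 0"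
  shows "Qp V E h = 0"
proof -
  have "\<forall>x\<in>V. (h x)^2 = 0"
  proof
    fix x assume x: "x \<in> V"
    have "(h x)^2 \<le> nsq V h" unfolding nsq_def by (rule member_le_sum[OF x]) (auto simp: fin)
    then show "(h x)^2 = 0" using n by (smt (verit) zero_le_power2)
  qed
  then have z: "\<forall>x\<in>V. h x = 0" by simp
  show ?thesis unfolding Qp_def
  proof (rule sum.neutral, rule ballI)
    fix p assume "p \<in> prs V E"
    then have "fst p \<in> V" "snd p \<in> V" by (auto simp: prs_def)
    then show "(h (fst p) - h (snd p))^2 = 0" using z by simp
  qed
qed

lemma eig_nsq_pos:
  assumes "finite V" "lap_eigenvector V E m f"
  shows "nsq V f > 0"
proof -
  obtain x where "x \<in> V" "f x \<noteq> 0" using assms(2) unfolding lap_eigenvector_def by blast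
  then show ?thesis using nsq_pos[OF assms(1)] by blast
qed

lemma max_bound:
  assumes sg: "simple_graph V E" and ne: "V \<noteq> {}"
  shows "\<forall>h. supp V h \<longrightarrow> Qp V E h \<le> 2 * lap_max_eig V E * nsq V h"
proof -
  have fin: "finite V" using sg simple_graph_def by auto
  obtain g where g: "supp V g" "nsq V g = 1" "\<forall>h. supp V h \<and> nsq V h = 1 \<longrightarrow> Qp V E h \<le> Qp V E g"
    using exists_max[OF fin ne] by blast
  define m0 where "m0 = Qp V E g / 2"
  have bnd: "\<forall>h. supp V h \<longrightarrow> Qp V E h \<le> 2 * m0 * nsq V h"
  proof (intro allI impI)
    fix h assume h: "supp V h"
    have n0: "nsq V h \<ge> 0" unfolding nsq_def by (simp add: sum_nonneg)
    show "Qp V E h \<le> 2 * m0 * nsq V h"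
    proof (cases "nsq V h = 0")
      case True then show ?thesis using Qp_zero[OF fin h] by simp
    next
      case False
      then have np: "nsq V h > 0" using n0 by simp
      define h' where "h' = (\<lambda>x. (1 / sqrt (nsq V h)) * h x)"
      have "supp V h'" using h by (simp add: h'_def supp_def)
      moreover have "nsq V h' = 1" unfolding h'_def nsq_scale using np by (simp add: power_divide)
      ultimately have "Qp V E h' \<le> Qp V E g" using g(3) by blast
      moreover have "Qp V E h' = Qp V E h / nsq V h" unfolding h'_def Qp_scale using np by (simp add: power_divide)
      ultimately have "Qp V E h / nsq V h \<le> Qp V E g" by simp
      then have "Qp V E h \<le> Qp V E g * nsq V h" using np by (simp add: divide_le_eq)
      then show ?thesis by (simp add: m0_def)
    qed
  qed
  have eqg: "Qp V E g = 2 * m0 * nsq V g" using g(2) by (simp add: m0_def)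
  have lg: "\<forall>x\<in>V. laplacian V E g x = m0 * g x"
    using maximizer_eig[OF sg g(1) bnd eqg] by blast
  moreover have "\<exists>x\<in>V. g x \<noteq> 0"
  proof (rule ccontr)
    assume "\<not> (\<exists>x\<in>V. g x \<noteq> 0)"
    then have "nsq V g = 0" by (simp add: nsq_def)
    with g(2) show False by simp
  qed
  then have "lap_eigenvector V E m0 g"
    using g(1) lg unfolding lap_eigenvector_def supp_def by blast
  then have m0e: "m0 \<in> lap_eigenvalues V E"
    unfolding lap_eigenvalues_def by blast
  have "\<mu> \<le> m0" if mu: "\<mu> \<in> lap_eigenvalues V E" for \<mu>
  proof -
    obtain f where f: "lap_eigenvector V E \<mu> f" using mu unfolding lap_eigenvalues_def by blast
    have fe: "\<forall>x\<in>V. laplacian V E f x = \<mu> * f x" using f unfolding lap_eigenvector_def by blast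
    have 1: "Qp V E f = 2 * \<mu> * nsq V f" by (rule eig_Qp[OF sg fe])
    have "supp V f" using f unfolding lap_eigenvector_def supp_def by blast
    then have 2: "Qp V E f \<le> 2 * m0 * nsq V f" using bnd by blast
    have 3: "nsq V f > 0" using eig_nsq_pos[OF fin f] .
    from 1 2 have "\<mu> * nsq V f \<le> m0 * nsq V f" by simp
    then show ?thesis using 3 by simp
  qed
  then have "lap_max_eig V E = m0"
    unfolding lap_max_eig_def using eigs_finite[OF sg] m0e by (intro Max_eqI) auto
  then show ?thesis using bnd by simp
qed


section \<open>Paths and components in trees\<close>

lemma path_single: "is_path E [x]"
  by (simp add: is_path_def)

lemma path_snoc:
  assumes p: "is_path E ps" and z: "z \<notin> set ps" and adj: "adj E (last ps) z"
  shows "is_path E (ps @ [z])"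
  unfolding is_path_def
proof (intro conjI allI impI)
  show "ps @ [z] \<noteq> []" by simp
  show "distinct (ps @ [z])" using p z by (simp add: is_path_def)
  fix i assume i: "Suc i < length (ps @ [z])"
  have ne: "ps \<noteq> []" using p by (simp add: is_path_def)
  show "adj E ((ps @ [z]) ! i) ((ps @ [z]) ! Suc i)"
  proof (cases "Suc i < length ps")
    case True
    then show ?thesis using p by (simp add: is_path_def nth_append)
  next
    case False
    then have ii: "i = length ps - 1" "Suc i = length ps" using i by auto
    then have "(ps @ [z]) ! i = last ps" using ne by (simp add: nth_append last_conv_nth)
    moreover have "(ps @ [z]) ! Suc i = z" using ii by (simp add: nth_append)
    ultimately show ?thesis using adj by simp
  qed
qed

lemma path_cons:
  assumes p: "is_path E ps" and z: "z \<notin> set ps" and adj: "adj E z (hd ps)"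
  shows "is_path E (z # ps)"
  unfolding is_path_def
proof (intro conjI allI impI)
  show "z # ps \<noteq> []" by simp
  show "distinct (z # ps)" using p z by (simp add: is_path_def)
  fix i assume i: "Suc i < length (z # ps)"
  have ne: "ps \<noteq> []" using p by (simp add: is_path_def)
  show "adj E ((z # ps) ! i) ((z # ps) ! Suc i)"
  proof (cases i)
    case 0
    then show ?thesis using adj ne by (simp add: hd_conv_nth)
  next
    case (Suc j)
    then show ?thesis using p i by (simp add: is_path_def)
  qed
qed

lemma path_take:
  assumes p: "is_path E ps" and i: "i < length ps"
  shows "is_path E (take (Suc i) ps)"
  using p i unfolding is_path_def by (auto simp: distinct_take)

lemma last_take_nth: "i < length ps \<Longrightarrow> last (take (Suc i) ps) = ps ! i"
  by (simp add: take_Suc_conv_app_nth)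

lemma hd_take_Suc: "ps \<noteq> [] \<Longrightarrow> hd (take (Suc i) ps) = hd ps"
  by (cases ps) auto

definition tcomp :: "'a set set \<Rightarrow> 'a \<Rightarrow> 'a \<Rightarrow> 'a set" where
  "tcomp E a b = {y. \<exists>ps. is_path E ps \<and> hd ps = b \<and> last ps = y \<and> a \<notin> set ps}"

lemma comp_self: "a \<noteq> b \<Longrightarrow> b \<in> tcomp E a b"
  unfolding tcomp_def by (rule CollectI, rule exI[of _ "[b]"]) (simp add: path_single)

lemma comp_notin: "a \<notin> tcomp E a b"
proof
  assume "a \<in> tcomp E a b"
  then obtain ps where "is_path E ps" "last ps = a" "a \<notin> set ps" unfolding tcomp_def by blast
  then show False using last_in_set[of ps] by (auto simp: is_path_def)
qed

lemma comp_closed: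
  assumes ac: "acyclic_graph E" and ab: "{a,b} \<in> E" and y: "y \<in> tcomp E a b"
    and yz: "{y,z} \<in> E" and z: "z \<notin> tcomp E a b"
  shows "y = b \<and> z = a"
proof -
  obtain ps where ps: "is_path E ps" "hd ps = b" "last ps = y" "a \<notin> set ps"
    using y unfolding tcomp_def by blast
  have ne: "ps \<noteq> []" using ps(1) by (simp add: is_path_def)
  have za: "z = a"
  proof (rule ccontr)
    assume za: "z \<noteq> a"
    show False
    proof (cases "z \<in> set ps")
      case True
      then obtain i where i: "i < length ps" "ps ! i = z" by (auto simp: in_set_conv_nth)
      have "is_path E (take (Suc i) ps)" by (rule path_take[OF ps(1) i(1)])
      moreover have "hd (take (Suc i) ps) = b" using ps(2) ne by (simp add: hd_take_Suc)
      moreover have "last (take (Suc i) ps) = z" using i by (simp add: last_take_nth)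
      moreover have "a \<notin> set (take (Suc i) ps)" using ps(4) by (meson in_set_takeD)
      ultimately have "z \<in> tcomp E a b" unfolding tcomp_def by blast
      with z show False by simp
    next
      case False
      have "is_path E (ps @ [z])" using path_snoc[OF ps(1) False] ps(3) yz by (simp add: adj_def)
      moreover have "hd (ps @ [z]) = b" using ps(2) ne by simp
      moreover have "last (ps @ [z]) = z" by simp
      moreover have "a \<notin> set (ps @ [z])" using ps(4) za by simp
      ultimately have "z \<in> tcomp E a b" unfolding tcomp_def by blast
      with z show False by simp
    qed
  qed
  have yb: "y = b"
  proof (rule ccontr)
    assume yb: "y \<noteq> b"
    have qs: "is_path E (ps @ [a])" using path_snoc[OF ps(1) ps(4)] ps(3) yz za by (simp add: adj_def)
    have "length ps \<noteq> 1"
    proof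
      assume "length ps = 1"
      then obtain x where "ps = [x]" by (cases ps) auto
      then show False using ps(2,3) yb by simp
    qed
    then have "length ps \<ge> 2" using ne by (cases ps) (auto simp: Suc_le_eq)
    then have "length (ps @ [a]) \<ge> 3" by simp
    moreover have "adj E (last (ps @ [a])) (hd (ps @ [a]))" using ab ps(2) ne by (simp add: adj_def)
    ultimately show False using ac qs unfolding acyclic_graph_def by blast
  qed
  show ?thesis using za yb by simp
qed

lemma comp_stay:
  assumes ac: "acyclic_graph E" and ab: "{a,b} \<in> E" and q: "is_path E qs"
    and l: "last qs \<in> tcomp E a b" and a: "a \<notin> set qs"
  shows "hd qs \<in> tcomp E a b"
proof -
  have ne: "qs \<noteq> []" using q by (simp add: is_path_def)
  have "\<forall>n. n < length qs \<longrightarrow> qs ! (length qs - 1 - n) \<in> tcomp E a b"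
  proof
    fix n show "n < length qs \<longrightarrow> qs ! (length qs - 1 - n) \<in> tcomp E a b"
    proof (induction n)
      case 0
      then show ?case using l ne by (simp add: last_conv_nth)
    next
      case (Suc n)
      show ?case
      proof
        assume n: "Suc n < length qs"
        define j where "j = length qs - 2 - n"
        have j1: "Suc j = length qs - 1 - n" "j = length qs - 1 - Suc n" using n by (auto simp: j_def)
        have yC: "qs ! Suc j \<in> tcomp E a b" using Suc n j1 by simp
        have "adj E (qs ! j) (qs ! Suc j)" using q n unfolding is_path_def j_def by auto
        then have e: "{qs ! Suc j, qs ! j} \<in> E" by (simp add: adj_def insert_commute)
        show "qs ! (length qs - 1 - Suc n) \<in> tcomp E a b"
        proof (rule ccontr)
          assume "qs ! (length qs - 1 - Suc n) \<notin> tcomp E a b"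
          then have "qs ! j \<notin> tcomp E a b" using j1 by simp
          then have "qs ! j = a" using comp_closed[OF ac ab yC e] by simp
          moreover have "qs ! j \<in> set qs" using n by (simp add: j_def)
          ultimately show False using a by simp
        qed
      qed
    qed
  qed
  then have "qs ! 0 \<in> tcomp E a b" using ne by (metis diff_less diff_self_eq_0 length_greater_0_conv less_one zero_less_diff)
  then show ?thesis using ne by (simp add: hd_conv_nth)
qed


section \<open>Eigenvectors for the maximum eigenvalue of a tree do not vanish\<close>

lemma nbr_fin: "finite V \<Longrightarrow> finite (nbr V E x)"
  by (simp add: nbr_def)

lemma zero_step:
  assumes tr: "is_tree V E"
    and bnd: "\<forall>h. supp V h \<longrightarrow> Qp V E h \<le> 2 * \<mu> * nsq V h"
    and fe: "lap_eigenvector V E \<mu> f" and fa: "f a = 0" and ab: "{a,b} \<in> E"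
  shows "f b = 0"
proof -
  have sg: "simple_graph V E" and ac: "acyclic_graph E" using tr by (auto simp: is_tree_def)
  have fin: "finite V" using sg simple_graph_def by auto
  have abV: "a \<in> V" "b \<in> V" "a \<noteq> b" using sg_edge[OF sg ab] by auto
  define C where "C = tcomp E a b"
  have bC: "b \<in> C" using abV by (simp add: C_def comp_self)
  have aC: "a \<notin> C" by (simp add: C_def comp_notin)
  define g where "g y = (if y \<in> C then - f y else f y)" for y
  have fs: "supp V f" using fe unfolding lap_eigenvector_def supp_def by blast
  have fl: "\<forall>x\<in>V. laplacian V E f x = \<mu> * f x" using fe unfolding lap_eigenvector_def by blast
  have gs: "supp V g" using fs by (simp add: supp_def g_def)
  have ng: "nsq V g = nsq V f" unfolding nsq_def by (rule sum.cong) (auto simp: g_def)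
  have qg: "Qp V E g = Qp V E f"
    unfolding Qp_def
  proof (rule sum.cong[OF refl])
    fix p assume p: "p \<in> prs V E"
    obtain y z where yz: "p = (y,z)" by (cases p)
    have e: "{y,z} \<in> E" using p yz by (simp add: prs_def adj_def)
    have e': "{z,y} \<in> E" using e by (simp add: insert_commute)
    have "(g y - g z)^2 = (f y - f z)^2"
    proof (cases "y \<in> C"; cases "z \<in> C")
      assume "y \<in> C" "z \<notin> C"
      then have "y = b \<and> z = a" using comp_closed[OF ac ab _ e] by (simp add: C_def)
      then show ?thesis using \<open>y \<in> C\<close> \<open>z \<notin> C\<close> fa by (simp add: g_def power2_eq_square)
    next
      assume "y \<notin> C" "z \<in> C"
      then have "z = b \<and> y = a" using comp_closed[OF ac ab _ e'] by (simp add: C_def)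
      then show ?thesis using \<open>y \<notin> C\<close> \<open>z \<in> C\<close> fa by (simp add: g_def power2_eq_square)
    qed (auto simp: g_def power2_eq_square algebra_simps)
    then show "(g (fst p) - g (snd p))^2 = (f (fst p) - f (snd p))^2" using yz by simp
  qed
  have "Qp V E g = 2 * \<mu> * nsq V g" using qg ng eig_Qp[OF sg fl] by simp
  then have "laplacian V E g a = \<mu> * g a" using maximizer_eig[OF sg gs bnd _ abV(1)] by blast
  then have lg: "(\<Sum>z\<in>nbr V E a. g a - g z) = 0" using fa aC by (simp add: lap_nbr[OF sg] g_def)
  have "laplacian V E f a = 0" using fl abV(1) fa by simp
  then have lf: "(\<Sum>z\<in>nbr V E a. f a - f z) = 0" by (simp only: lap_nbr[OF sg])
  have "(\<Sum>z\<in>nbr V E a. g a - g z) = (\<Sum>z\<in>nbr V E a. (f a - f z) + (if z = b then 2 * f b else 0))"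
  proof (rule sum.cong[OF refl])
    fix z assume z: "z \<in> nbr V E a"
    show "g a - g z = (f a - f z) + (if z = b then 2 * f b else 0)"
    proof (cases "z = b")
      case True then show ?thesis using aC bC by (simp add: g_def)
    next
      case False
      have "z \<notin> C"
      proof
        assume zC: "z \<in> C"
        have "{z,a} \<in> E" using z by (simp add: nbr_def adj_def insert_commute)
        then have "z = b" using comp_closed[OF ac ab zC[unfolded C_def]] aC by (simp add: C_def)
        with False show False by simp
      qed
      then show ?thesis using aC False by (simp add: g_def)
    qed
  qed
  also have "\<dots> = (\<Sum>z\<in>nbr V E a. f a - f z) + 2 * f b"
    using abV ab nbr_fin[OF fin] by (simp add: sum.distrib nbr_def adj_def)
  finally show ?thesis using lg lf by simp
qed

lemma nowhere_zero:
  assumes tr: "is_tree V E"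
    and bnd: "\<forall>h. supp V h \<longrightarrow> Qp V E h \<le> 2 * \<mu> * nsq V h"
    and fe: "lap_eigenvector V E \<mu> f" and aV: "a \<in> V"
  shows "f a \<noteq> 0"
proof
  assume fa: "f a = 0"
  have con: "connected_graph V E" using tr by (simp add: is_tree_def)
  have "f y = 0" if yV: "y \<in> V" for y
  proof -
    obtain ps where ps: "is_path E ps" "hd ps = a" "last ps = y" using con aV yV unfolding connected_graph_def by blast
    have ne: "ps \<noteq> []" using ps(1) by (simp add: is_path_def)
    have "\<forall>i. i < length ps \<longrightarrow> f (ps ! i) = 0"
    proof
      fix i show "i < length ps \<longrightarrow> f (ps ! i) = 0"
      proof (induction i)
        case 0 then show ?case using ps(2) fa ne by (simp add: hd_conv_nth)
      next
        case (Suc i)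
        show ?case
        proof
          assume i: "Suc i < length ps"
          then have "adj E (ps ! i) (ps ! Suc i)" using ps(1) by (simp add: is_path_def)
          then have "{ps ! i, ps ! Suc i} \<in> E" by (simp add: adj_def)
          moreover have "f (ps ! i) = 0" using Suc i by simp
          ultimately show "f (ps ! Suc i) = 0" using zero_step[OF tr bnd fe] by blast
        qed
      qed
    qed
    moreover have "length ps - 1 < length ps" using ne by simp
    ultimately have "f (ps ! (length ps - 1)) = 0" by blast
    then show ?thesis using ps(3) ne by (simp add: last_conv_nth)
  qed
  then show False using fe unfolding lap_eigenvector_def by blast
qed


lemma key_ineq:
  fixes fu fv c s :: real
  assumes "s * s = 1" "s * fv * c \<le> 0" "\<bar>fu\<bar> \<le> \<bar>fv\<bar>"
  shows "(fu - c)^2 \<le> (fv - s * c)^2"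
proof -
  have "fu^2 \<le> fv^2" using assms(3) by (simp add: abs_le_square_iff)
  moreover have "\<bar>fu\<bar> * \<bar>c\<bar> \<le> \<bar>fv\<bar> * \<bar>c\<bar>" using assms(3) by (simp add: mult_right_mono)
  moreover have "- (fu * c) \<le> \<bar>fu\<bar> * \<bar>c\<bar>"
  proof -
    have "- (fu * c) \<le> \<bar>fu * c\<bar>" by (rule abs_ge_minus_self)
    then show ?thesis by (simp only: abs_mult)
  qed
  moreover have "\<bar>fv\<bar> * \<bar>c\<bar> = - (s * fv * c)"
  proof -
    have "s = 1 \<or> s = -1" using assms(1) by (simp add: square_eq_1_iff)
    then have "\<bar>s\<bar> = 1" by auto
    then have "\<bar>s * fv * c\<bar> = \<bar>fv\<bar> * \<bar>c\<bar>" by (simp add: abs_mult)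
    then show ?thesis using assms(2) by simp
  qed
  moreover have "(fu - c)^2 = fu^2 - 2 * (fu * c) + c^2" by (simp add: power2_eq_square algebra_simps)
  moreover have "(fv - s * c)^2 = fv^2 - 2 * (s * fv * c) + (s * s) * c^2" by (simp add: power2_eq_square algebra_simps)
  ultimately show ?thesis using assms(1) by simp
qed

theorem lemma6:
  fixes V :: "'a set" and E :: "'a set set" and u v :: 'a and X :: "'a set"
    and f :: "'a \<Rightarrow> real"
  assumes tree: "is_tree V E"
    and uV: "u \<in> V" and vV: "v \<in> V" and uv: "u \<noteq> v"
    and X_ne: "X \<noteq> {}"
    and X_edges: "\<forall>x\<in>X. {u, x} \<in> E"
    and X_off: "\<forall>x\<in>X. \<not> on_path E u v x"
    and eig: "lap_eigenvector V E (lap_max_eig V E) f"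
    and fuv: "\<bar>f u\<bar> \<le> \<bar>f v\<bar>"
  shows "lap_max_eig V ((E - (\<lambda>x. {u, x}) ` X) \<union> (\<lambda>x. {v, x}) ` X) > lap_max_eig V E"
proof -
  have sg: "simple_graph V E" and ac: "acyclic_graph E" and con: "connected_graph V E"
    using tree by (auto simp: is_tree_def)
  have fin: "finite V" using sg simple_graph_def by auto
  have Vne: "V \<noteq> {}" using uV by auto
  define lam where "lam = lap_max_eig V E"
  have bnd: "\<forall>h. supp V h \<longrightarrow> Qp V E h \<le> 2 * lam * nsq V h"
    unfolding lam_def by (rule max_bound[OF sg Vne])
  have fe: "lap_eigenvector V E lam f" using eig by (simp add: lam_def)
  have fl: "\<forall>x\<in>V. laplacian V E f x = lam * f x" using fe unfolding lap_eigenvector_def by blast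
  have fs: "supp V f" using fe unfolding lap_eigenvector_def supp_def by blast
  have nz: "\<And>x. x \<in> V \<Longrightarrow> f x \<noteq> 0" using nowhere_zero[OF tree bnd fe] by blast
  have XV: "\<And>x. x \<in> X \<Longrightarrow> x \<in> V \<and> x \<noteq> u" using sg_edge[OF sg] X_edges by blast
  have finX: "finite X" using XV fin by (meson finite_subset subsetI)
  obtain pv where pv: "is_path E pv" "hd pv = u" "last pv = v"
    using con uV vV unfolding connected_graph_def by blast
  have xv: "\<And>x. x \<in> X \<Longrightarrow> x \<noteq> v"
  proof
    fix x assume x: "x \<in> X" "x = v"
    have "pv \<noteq> []" using pv(1) by (simp add: is_path_def)
    then have "v \<in> set pv" using pv(3) last_in_set by metis
    then have "on_path E u v x" using pv x unfolding on_path_def by blast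
    with X_off x show False by blast
  qed
  have vxE: "\<And>x. x \<in> X \<Longrightarrow> {v, x} \<notin> E"
  proof
    fix x assume x: "x \<in> X" and e: "{v,x} \<in> E"
    have "is_path E [x, v]"
      using path_cons[OF path_single[of E v]] xv[OF x] e by (simp add: adj_def insert_commute)
    then have "is_path E [u, x, v]"
      using path_cons[of E "[x,v]" u] XV[OF x] uv X_edges x by (auto simp: adj_def)
    then have "on_path E u v x" unfolding on_path_def by (intro exI[of _ "[u,x,v]"]) simp
    with X_off x show False by blast
  qed
  define C where "C x = tcomp E u x" for x
  have xC: "\<And>x. x \<in> X \<Longrightarrow> x \<in> C x" using XV unfolding C_def by (metis comp_self)
  have uC: "\<And>x. u \<notin> C x" by (simp add: C_def comp_notin)
  have cl: "\<And>x y z. x \<in> X \<Longrightarrow> y \<in> C x \<Longrightarrow> {y,z} \<in> E \<Longrightarrow> z \<notin> C x \<Longrightarrow> y = x \<and> z = u"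
    using comp_closed[OF ac] X_edges unfolding C_def by blast
  have vC: "\<And>x. x \<in> X \<Longrightarrow> v \<notin> C x"
  proof
    fix x assume x: "x \<in> X" and "v \<in> C x"
    then obtain ps where ps: "is_path E ps" "hd ps = x" "last ps = v" "u \<notin> set ps"
      unfolding C_def tcomp_def by blast
    have ne: "ps \<noteq> []" using ps(1) by (simp add: is_path_def)
    have "is_path E (u # ps)" using path_cons[OF ps(1) ps(4)] ps(2) X_edges x by (simp add: adj_def)
    moreover have "x \<in> set (u # ps)" using ps(2) ne by auto
    ultimately have "on_path E u v x" using ps(3) ne unfolding on_path_def by (intro exI[of _ "u # ps"]) simp
    with X_off x show False by blast
  qed
  have disj: "\<And>x1 x2 y. x1 \<in> X \<Longrightarrow> x2 \<in> X \<Longrightarrow> y \<in> C x1 \<Longrightarrow> y \<in> C x2 \<Longrightarrow> x1 = x2"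
  proof -
    fix x1 x2 y assume x1: "x1 \<in> X" and x2: "x2 \<in> X" and y1: "y \<in> C x1" and y2: "y \<in> C x2"
    obtain ps where ps: "is_path E ps" "hd ps = x2" "last ps = y" "u \<notin> set ps"
      using y2 unfolding C_def tcomp_def by blast
    have "hd ps \<in> tcomp E u x1"
      using comp_stay[OF ac _ ps(1) _ ps(4)] X_edges x1 ps(3) y1 by (simp add: C_def)
    then have x2C: "x2 \<in> C x1" using ps(2) by (simp add: C_def)
    have "{x2, u} \<in> E" using X_edges x2 by (metis insert_commute)
    then show "x1 = x2" using cl[OF x1 x2C _ uC] by simp
  qed
  define s where "s x = (if f v * f x > 0 then -1 else (1::real))" for x
  have s2: "\<And>x. s x * s x = 1" by (simp add: s_def)
  have sneg: "\<And>x. x \<in> X \<Longrightarrow> s x * f v * f x < 0"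
  proof -
    fix x assume x: "x \<in> X"
    have ne: "f v * f x \<noteq> 0" using nz[OF vV] nz XV[OF x] by simp
    show "s x * f v * f x < 0"
    proof (cases "f v * f x > 0")
      case True then show ?thesis by (simp add: s_def)
    next
      case False then have "f v * f x < 0" using ne by linarith
      then show ?thesis using False by (simp add: s_def)
    qed
  qed
  define \<sigma> where "\<sigma> y = (if \<exists>x\<in>X. y \<in> C x then s (SOME x. x \<in> X \<and> y \<in> C x) else 1)" for y
  have \<sigma>C: "\<And>x y. x \<in> X \<Longrightarrow> y \<in> C x \<Longrightarrow> \<sigma> y = s x"
  proof -
    fix x y assume x: "x \<in> X" and y: "y \<in> C x"
    have "(SOME x. x \<in> X \<and> y \<in> C x) = x"
      by (rule some_equality) (use x y disj in auto)
    then show "\<sigma> y = s x" using x y by (auto simp: \<sigma>_def)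
  qed
  have \<sigma>N: "\<And>y. (\<forall>x\<in>X. y \<notin> C x) \<Longrightarrow> \<sigma> y = 1" by (simp add: \<sigma>_def)
  have \<sigma>2: "\<And>y. \<sigma> y * \<sigma> y = 1" by (simp add: \<sigma>_def s2)
  define h where "h y = \<sigma> y * f y" for y
  have hs: "supp V h" using fs by (simp add: supp_def h_def)
  have nh: "nsq V h = nsq V f"
    unfolding nsq_def h_def
  proof (rule sum.cong[OF refl])
    fix y show "(\<sigma> y * f y)^2 = (f y)^2"
      by (simp add: power2_eq_square) (metis \<sigma>2 mult.assoc mult.commute mult_1)
  qed
  have hv: "h v = f v" using vC \<sigma>N by (simp add: h_def)
  have hx: "\<And>x. x \<in> X \<Longrightarrow> h x = s x * f x" using \<sigma>C xC by (simp add: h_def)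
  define E' where "E' = (E - (\<lambda>x. {u, x}) ` X) \<union> (\<lambda>x. {v, x}) ` X"
  have E'iff: "\<And>y z. {y,z} \<in> E' \<longleftrightarrow> ({y,z} \<in> E \<and> \<not> (\<exists>x\<in>X. {y,z} = {u,x})) \<or> (\<exists>x\<in>X. {y,z} = {v,x})"
    by (auto simp: E'_def)
  have sg': "simple_graph V E'"
    unfolding simple_graph_def
  proof (intro conjI ballI)
    show "finite V" by (rule fin)
    fix e assume "e \<in> E'"
    then consider "e \<in> E" | x where "x \<in> X" "e = {v,x}" by (auto simp: E'_def)
    then show "\<exists>x y. x \<noteq> y \<and> x \<in> V \<and> y \<in> V \<and> e = {x, y}"
    proof cases
      case 1 then show ?thesis using sg unfolding simple_graph_def by blast
    next
      case 2 then show ?thesis using xv XV vV by blast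
    qed
  qed
  have bnd': "\<forall>g. supp V g \<longrightarrow> Qp V E' g \<le> 2 * lap_max_eig V E' * nsq V g"
    by (rule max_bound[OF sg' Vne])
  define U where "U = (\<lambda>x. (u,x)) ` X \<union> (\<lambda>x. (x,u)) ` X"
  define W where "W = (\<lambda>x. (v,x)) ` X \<union> (\<lambda>x. (x,v)) ` X"
  have UP: "U \<subseteq> prs V E"
    using X_edges XV uV by (auto simp: U_def prs_def adj_def insert_commute)
  have WP: "W \<inter> prs V E = {}"
    using vxE by (auto simp: W_def prs_def adj_def insert_commute)
  have P'eq: "prs V E' = (prs V E - U) \<union> W"
  proof (rule set_eqI)
    fix p :: "'a \<times> 'a"
    obtain y z where p: "p = (y,z)" by (cases p)
    have inU: "(y,z) \<in> U \<longleftrightarrow> (\<exists>x\<in>X. {y,z} = {u,x})"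
      by (auto simp: U_def doubleton_eq_iff)
    have inW: "(y,z) \<in> W \<longleftrightarrow> (\<exists>x\<in>X. {y,z} = {v,x})"
      by (auto simp: W_def doubleton_eq_iff)
    have WV: "(y,z) \<in> W \<Longrightarrow> y \<in> V \<and> z \<in> V" using XV vV by (auto simp: W_def)
    show "p \<in> prs V E' \<longleftrightarrow> p \<in> (prs V E - U) \<union> W"
      unfolding p prs_def adj_def using E'iff[of y z] inU inW WV by auto
  qed
  have finP: "finite (prs V E)" by (rule fin_prs[OF fin])
  have finW: "finite W" using finX by (simp add: W_def)
  have same: "\<And>p. p \<in> prs V E - U \<Longrightarrow> (h (fst p) - h (snd p))^2 = (f (fst p) - f (snd p))^2"
  proof -
    fix p assume pp: "p \<in> prs V E - U"
    obtain y z where p: "p = (y,z)" by (cases p)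
    have e: "{y,z} \<in> E" using pp p by (simp add: prs_def adj_def)
    have e': "{z,y} \<in> E" using e by (simp add: insert_commute)
    have nU: "(y,z) \<notin> U" using pp p by simp
    have "\<sigma> y = \<sigma> z"
    proof (cases "\<exists>x\<in>X. y \<in> C x")
      case True
      then obtain x where x: "x \<in> X" "y \<in> C x" by blast
      have "z \<in> C x"
      proof (rule ccontr)
        assume "z \<notin> C x"
        then have "y = x \<and> z = u" using cl[OF x e] by blast
        then have "(y,z) \<in> U" using x by (simp add: U_def)
        with nU show False by simp
      qed
      then show ?thesis using \<sigma>C x by simp
    next
      case False
      have "\<forall>x\<in>X. z \<notin> C x"
      proof (intro ballI notI)
        fix x assume x: "x \<in> X" and z: "z \<in> C x"
        have "y \<notin> C x" using False x by blast
        then have "z = x \<and> y = u" using cl[OF x z e'] by blast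
        then have "(y,z) \<in> U" using x by (simp add: U_def)
        with nU show False by simp
      qed
      then show ?thesis using False \<sigma>N by simp
    qed
    then have "(h y - h z)^2 = (\<sigma> y * \<sigma> y) * (f y - f z)^2"
      by (simp add: h_def power2_eq_square algebra_simps)
    then show "(h (fst p) - h (snd p))^2 = (f (fst p) - f (snd p))^2" using p \<sigma>2 by simp
  qed
  have injv1: "inj_on (\<lambda>x. (v,x)) X" by (simp add: inj_on_def)
  have injv2: "inj_on (\<lambda>x. (x,v)) X" by (simp add: inj_on_def)
  have inju1: "inj_on (\<lambda>x. (u,x)) X" by (simp add: inj_on_def)
  have inju2: "inj_on (\<lambda>x. (x,u)) X" by (simp add: inj_on_def)
  have dW: "(\<lambda>x. (v,x)) ` X \<inter> (\<lambda>x. (x,v)) ` X = {}" using xv by auto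
  have dU: "(\<lambda>x. (u,x)) ` X \<inter> (\<lambda>x. (x,u)) ` X = {}" using XV by auto
  define \<phi>h where "\<phi>h p = (h (fst p) - h (snd p))^2" for p
  define \<phi>f where "\<phi>f p = (f (fst p) - f (snd p))^2" for p
  have sumW: "(\<Sum>p\<in>W. \<phi>h p) = (\<Sum>x\<in>X. 2 * (f v - s x * f x)^2)"
  proof -
    have "(\<Sum>p\<in>W. \<phi>h p) = (\<Sum>p\<in>(\<lambda>x. (v,x)) ` X. \<phi>h p) + (\<Sum>p\<in>(\<lambda>x. (x,v)) ` X. \<phi>h p)"
      unfolding W_def by (rule sum.union_disjoint) (use finX dW in auto)
    also have "\<dots> = (\<Sum>x\<in>X. \<phi>h (v,x)) + (\<Sum>x\<in>X. \<phi>h (x,v))"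
      by (simp add: sum.reindex[OF injv1] sum.reindex[OF injv2])
    also have "\<dots> = (\<Sum>x\<in>X. 2 * (f v - s x * f x)^2)"
      by (simp add: sum.distrib[symmetric] \<phi>h_def hv hx power2_commute cong: sum.cong)
    finally show ?thesis .
  qed
  have sumU: "(\<Sum>p\<in>U. \<phi>f p) = (\<Sum>x\<in>X. 2 * (f u - f x)^2)"
  proof -
    have "(\<Sum>p\<in>U. \<phi>f p) = (\<Sum>p\<in>(\<lambda>x. (u,x)) ` X. \<phi>f p) + (\<Sum>p\<in>(\<lambda>x. (x,u)) ` X. \<phi>f p)"
      unfolding U_def by (rule sum.union_disjoint) (use finX dU in auto)
    also have "\<dots> = (\<Sum>x\<in>X. \<phi>f (u,x)) + (\<Sum>x\<in>X. \<phi>f (x,u))"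
      by (simp add: sum.reindex[OF inju1] sum.reindex[OF inju2])
    also have "\<dots> = (\<Sum>x\<in>X. 2 * (f u - f x)^2)"
      by (simp add: sum.distrib[symmetric] \<phi>f_def power2_commute)
    finally show ?thesis .
  qed
  have "(\<Sum>x\<in>X. 2 * (f u - f x)^2) \<le> (\<Sum>x\<in>X. 2 * (f v - s x * f x)^2)"
  proof (rule sum_mono)
    fix x assume x: "x \<in> X"
    have "(f u - f x)^2 \<le> (f v - s x * f x)^2"
      using key_ineq[OF s2 _ fuv] sneg[OF x] by (simp add: less_imp_le)
    then show "2 * (f u - f x)^2 \<le> 2 * (f v - s x * f x)^2" by simp
  qed
  then have UW: "(\<Sum>p\<in>U. \<phi>f p) \<le> (\<Sum>p\<in>W. \<phi>h p)" using sumU sumW by simp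
  have "Qp V E' h = (\<Sum>p\<in>prs V E - U. \<phi>h p) + (\<Sum>p\<in>W. \<phi>h p)"
    unfolding Qp_def P'eq \<phi>h_def[symmetric]
    by (rule sum.union_disjoint) (use finP finW WP in auto)
  moreover have "Qp V E f = (\<Sum>p\<in>prs V E - U. \<phi>f p) + (\<Sum>p\<in>U. \<phi>f p)"
    unfolding Qp_def \<phi>f_def[symmetric] using sum.subset_diff[OF UP finP] by simp
  moreover have "(\<Sum>p\<in>prs V E - U. \<phi>h p) = (\<Sum>p\<in>prs V E - U. \<phi>f p)"
    by (rule sum.cong[OF refl]) (simp add: \<phi>h_def \<phi>f_def same)
  ultimately have key: "Qp V E f \<le> Qp V E' h" using UW by linarith
  have Qf: "Qp V E f = 2 * lam * nsq V f" by (rule eig_Qp[OF sg fl])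
  have nfpos: "nsq V f > 0" using eig_nsq_pos[OF fin fe] .
  have "lap_max_eig V E' > lam"
  proof (rule ccontr)
    assume "\<not> lap_max_eig V E' > lam"
    then have le: "lap_max_eig V E' \<le> lam" by simp
    have bndl: "\<forall>g. supp V g \<longrightarrow> Qp V E' g \<le> 2 * lam * nsq V g"
    proof (intro allI impI)
      fix g assume g: "supp V g"
      have "nsq V g \<ge> 0" unfolding nsq_def by (simp add: sum_nonneg)
      then have "2 * lap_max_eig V E' * nsq V g \<le> 2 * lam * nsq V g" using le by (simp add: mult_right_mono)
      then show "Qp V E' g \<le> 2 * lam * nsq V g" using bnd' g by fastforce
    qed
    have "Qp V E' h \<le> 2 * lam * nsq V h" using bndl hs by blast
    then have eqh: "Qp V E' h = 2 * lam * nsq V h" using key Qf nh by simp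
    have lh: "\<And>x. x \<in> V \<Longrightarrow> laplacian V E' h x = lam * h x"
      using maximizer_eig[OF sg' hs bndl eqh] by blast
    have nbru: "nbr V E' u = nbr V E u - X"
    proof (rule set_eqI)
      fix y
      have a: "(\<exists>x\<in>X. {u,y} = {u,x}) \<longleftrightarrow> y \<in> X" using XV by (auto simp: doubleton_eq_iff)
      have b: "\<not> (\<exists>x\<in>X. {u,y} = {v,x})" using XV uv by (auto simp: doubleton_eq_iff)
      show "y \<in> nbr V E' u \<longleftrightarrow> y \<in> nbr V E u - X"
        unfolding nbr_def adj_def using E'iff[of u y] a b XV by auto
    qed
    have Xnu: "X \<subseteq> nbr V E u" using X_edges XV by (auto simp: nbr_def adj_def)
    have hnu: "\<And>y. y \<in> nbr V E u - X \<Longrightarrow> h y = f y"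
    proof -
      fix y assume y: "y \<in> nbr V E u - X"
      have "\<forall>x\<in>X. y \<notin> C x"
      proof (intro ballI notI)
        fix x assume x: "x \<in> X" and yC: "y \<in> C x"
        have "{y,u} \<in> E" using y by (auto simp: nbr_def adj_def insert_commute)
        then have "y = x" using cl[OF x yC _ uC] by blast
        with y x show False by simp
      qed
      then show "h y = f y" using \<sigma>N by (simp add: h_def)
    qed
    have hu: "h u = f u" using uC \<sigma>N by (simp add: h_def)
    have finnu: "finite (nbr V E u)" by (rule nbr_fin[OF fin])
    have "(\<Sum>y\<in>nbr V E u - X. f u - f y) = lam * f u"
    proof -
      have "(\<Sum>y\<in>nbr V E u - X. f u - f y) = (\<Sum>y\<in>nbr V E' u. h u - h y)"
        unfolding nbru by (rule sum.cong[OF refl]) (simp add: hu hnu)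
      also have "\<dots> = laplacian V E' h u" by (simp add: lap_nbr[OF sg'])
      also have "\<dots> = lam * f u" using lh[OF uV] hu by simp
      finally show ?thesis .
    qed
    moreover have "(\<Sum>y\<in>nbr V E u. f u - f y) = lam * f u"
      using fl uV by (simp add: lap_nbr[OF sg])
    moreover have "(\<Sum>y\<in>nbr V E u. f u - f y) = (\<Sum>y\<in>nbr V E u - X. f u - f y) + (\<Sum>y\<in>X. f u - f y)"
      by (rule sum.subset_diff[OF Xnu finnu])
    ultimately have E1: "(\<Sum>x\<in>X. f u - f x) = 0" by simp
    have E3: "\<And>x. x \<in> X \<Longrightarrow> f u = s x * f v"
    proof -
      fix x0 assume x0: "x0 \<in> X"
      have x0V: "x0 \<in> V" and x0u: "x0 \<noteq> u" using XV[OF x0] by auto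
      have nbrx: "nbr V E' x0 = insert v (nbr V E x0 - {u})"
      proof (rule set_eqI)
        fix y
        have a: "(\<exists>x\<in>X. {x0,y} = {u,x}) \<longleftrightarrow> y = u" using x0 x0u by (auto simp: doubleton_eq_iff)
        have b: "(\<exists>x\<in>X. {x0,y} = {v,x}) \<longleftrightarrow> y = v" using x0 xv[OF x0] by (auto simp: doubleton_eq_iff)
        show "y \<in> nbr V E' x0 \<longleftrightarrow> y \<in> insert v (nbr V E x0 - {u})"
          unfolding nbr_def adj_def using E'iff[of x0 y] a b vV by auto
      qed
      have vn: "v \<notin> nbr V E x0 - {u}" using vxE[OF x0] by (auto simp: nbr_def adj_def insert_commute)
      have un: "u \<in> nbr V E x0" using X_edges x0 uV by (auto simp: nbr_def adj_def insert_commute)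
      have hn: "\<And>y. y \<in> nbr V E x0 - {u} \<Longrightarrow> h y = s x0 * f y"
      proof -
        fix y assume y: "y \<in> nbr V E x0 - {u}"
        have "y \<in> C x0"
        proof (rule ccontr)
          assume "y \<notin> C x0"
          moreover have "{x0,y} \<in> E" using y by (simp add: nbr_def adj_def)
          ultimately have "y = u" using cl[OF x0 xC[OF x0]] by blast
          with y show False by simp
        qed
        then show "h y = s x0 * f y" using \<sigma>C[OF x0] by (simp add: h_def)
      qed
      have finn: "finite (nbr V E x0 - {u})" using nbr_fin[OF fin] by simp
      define A where "A = (\<Sum>y\<in>nbr V E x0 - {u}. f x0 - f y)"
      have "laplacian V E' h x0 = (\<Sum>y\<in>insert v (nbr V E x0 - {u}). h x0 - h y)"
        by (simp add: lap_nbr[OF sg'] nbrx)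
      also have "\<dots> = (h x0 - h v) + (\<Sum>y\<in>nbr V E x0 - {u}. h x0 - h y)"
        by (rule sum.insert[OF finn vn])
      also have "(\<Sum>y\<in>nbr V E x0 - {u}. h x0 - h y) = s x0 * A"
        unfolding A_def sum_distrib_left
        by (rule sum.cong[OF refl]) (simp add: hn hx[OF x0] algebra_simps)
      finally have L1: "laplacian V E' h x0 = (s x0 * f x0 - f v) + s x0 * A" by (simp add: hx[OF x0] hv)
      have "laplacian V E f x0 = (\<Sum>y\<in>nbr V E x0. f x0 - f y)" by (simp add: lap_nbr[OF sg])
      also have "\<dots> = (f x0 - f u) + A"
        unfolding A_def by (rule sum.remove[OF nbr_fin[OF fin] un])
      finally have L2: "laplacian V E f x0 = (f x0 - f u) + A" .
      have 1: "(s x0 * f x0 - f v) + s x0 * A = lam * (s x0 * f x0)"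
        using lh[OF x0V] L1 hx[OF x0] by simp
      have 2: "(f x0 - f u) + A = lam * f x0" using fl x0V L2 by simp
      have "s x0 * ((f x0 - f u) + A) = s x0 * (lam * f x0)" using 2 by simp
      then have "f v = s x0 * f u" using 1 by (simp add: algebra_simps)
      then have "s x0 * f v = (s x0 * s x0) * f u" by simp
      then show "f u = s x0 * f v" using s2 by simp
    qed
    have "(\<Sum>x\<in>X. f u * f u - f u * f x) > 0"
    proof (rule sum_pos[OF finX X_ne])
      fix x assume x: "x \<in> X"
      have "f u * f x < 0" using E3[OF x] sneg[OF x] by (simp add: mult.assoc)
      moreover have "f u * f u \<ge> 0" by simp
      ultimately show "f u * f u - f u * f x > 0" by linarith
    qed
    moreover have "(\<Sum>x\<in>X. f u * f u - f u * f x) = f u * (\<Sum>x\<in>X. f u - f x)"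
      by (simp add: sum_distrib_left right_diff_distrib)
    ultimately show False using E1 by simp
  qed
  then show ?thesis by (simp add: lam_def E'_def)
qed

end
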